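(* For each $l\in\{0,\dots,d-1\}$, writing $\varepsilon_{N,l}=q^{-dN-l}$, one has \[\lim_{N\to\infty} f^{-N}\sqrt{D}\,\Lambda_{\varepsilon_{N,l}}(f)=\mathfrak a_{d-1-l},\] where the convergence is in the Hausdorff metric on subsets of $k_\infty$ and $\mathfrak a_{d-1-l}=(f,fT,\dots,fT^{d-1-l})\subset A_{\infty_1}$.
   Context: Let $q$ be a power of a prime, $k=\mathbb F_q(T)$, $A=\mathbb F_q[T]$, $k_\infty=\mathbb F_q((1/T))$ with absolute value $|x|=q^{\deg_T x}$ (i.e. $q^{-v_\infty(x)}$). For $x\in k_\infty$ let $\|x\|$ be the distance from $x$ to the nearest element of $A$. For $f\in k_\infty$ and $\varepsilon>0$ let $\Lambda_\varepsilon(f)=\{\lambda\in A:\|\lambda f\|<\varepsilon\}$ (an $\mathbb F_q$-vector space). Let $f\in k_\infty\setminus k$ be a quadratic unit: $f$ is a root of $X^2-aX-b$ with $a\in A$ monic, $d:=\deg_T a\ge 1$, $b\in\mathbb F_q^*$, and $f$ is the root with $|f|=q^d$ (the conjugate $f^*$ has $|f^*|=q^{-d}$). Let $D=a^2+4b$, with $\sqrt D$ chosen so that $f=(a+\sqrt D)/2$ if the characteristic is odd, and $\sqrt D=a$ in characteristic $2$. Let $K=k(f)\subset k_\infty$, let $\infty_1$ be the place of $K$ induced by the embedding $K\subset k_\infty$ (so $v_{\infty_1}(f)=-d$), and let $A_{\infty_1}$ be the ring of elements of $K$ regular away from $\infty_1$; one has $A_{\infty_1}=\mathbb F_q[f,fT,\dots,fT^{d-1}]$.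 For $0\le i\le d-1$, $\mathfrak a_i$ denotes the ideal $(f,fT,\dots,fT^i)$ of $A_{\infty_1}$. *)

theory Defs
  imports "HOL-Computational_Algebra.Computational_Algebra" "HOL-Library.Extended_Real" "HOL-Library.Cardinality"
begin

text \<open>Model of k_infinity = F_q((1/T)): the type 'a fls of formal Laurent series in X
 (finitely many negative powers) with X = 1/T.  Thus T = fls_X_inv, and
 the coefficient x $$ n is the coefficient of T^(-n).  The finite field F_q is a
 finite field type 'a, q = CARD('a).\<close>

definition absv :: "'a::{field,finite} fls \<Rightarrow> real" where
  "absv x = (if x = 0 then 0 else real CARD('a) powr (- of_int (fls_subdegree x)))"

definition poly_to_fls :: "'a::{field,finite} poly \<Rightarrow> 'a fls" where
  "poly_to_fls p = (\<Sum>i\<le>degree p. fls_const (coeff p i) * fls_X_inv ^ i)"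

definition A_set :: "'a::{field,finite} fls set" where
  "A_set = range poly_to_fls"

definition k_set :: "'a::{field,finite} fls set" where
  "k_set = {poly_to_fls p / poly_to_fls r | p r. r \<noteq> 0}"

definition dist_A :: "'a::{field,finite} fls \<Rightarrow> real" where
  "dist_A x = Inf ((\<lambda>a. absv (x - a)) ` A_set)"

definition Lambda :: "real \<Rightarrow> 'a::{field,finite} fls \<Rightarrow> 'a fls set" where
  "Lambda \<epsilon> f = {lam \<in> A_set. dist_A (lam * f) < \<epsilon>}"

text \<open>sqrt D: in odd characteristic chosen so that f = (a + sqrt D)/2, i.e. sqrt D = 2f - a;
  in characteristic 2, sqrt D = a.\<close>
definition sqrtD :: "'a::{field,finite} fls \<Rightarrow> 'a poly \<Rightarrow> 'a fls" where
  "sqrtD f a = (if CHAR('a) = 2 then poly_to_fls a else 2 * f - poly_to_fls a)"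

inductive_set A_inf1 :: "'a::{field,finite} fls \<Rightarrow> nat \<Rightarrow> 'a fls set"
  for f :: "'a fls" and d :: nat where
  const: "fls_const c \<in> A_inf1 f d"
| gen: "j < d \<Longrightarrow> f * fls_X_inv ^ j \<in> A_inf1 f d"
| add: "x \<in> A_inf1 f d \<Longrightarrow> y \<in> A_inf1 f d \<Longrightarrow> x + y \<in> A_inf1 f d"
| mult: "x \<in> A_inf1 f d \<Longrightarrow> y \<in> A_inf1 f d \<Longrightarrow> x * y \<in> A_inf1 f d"

definition ideal_a :: "'a::{field,finite} fls \<Rightarrow> nat \<Rightarrow> nat \<Rightarrow> 'a fls set" where
  "ideal_a f d i = {(\<Sum>j\<le>i. r j * (f * fls_X_inv ^ j)) | r. \<forall>j\<le>i. r j \<in> A_inf1 f d}"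

definition hausdorff_dist :: "'a::{field,finite} fls set \<Rightarrow> 'a fls set \<Rightarrow> ereal" where
  "hausdorff_dist S S' = max (SUP x\<in>S. INF y\<in>S'. ereal (absv (x - y)))
                            (SUP y\<in>S'. INF x\<in>S. ereal (absv (x - y)))"

end

theory Submission imports Defs begin
unbundle fps_syntax

lemma fls_const_add': "fls_const (x + y) = fls_const x + fls_const (y::'a::field)"
  by (intro fls_eqI) simp

lemma fls_const_diff': "fls_const (x - y) = fls_const x - fls_const (y::'a::field)"
  by (intro fls_eqI) simp

lemma pf_poly: "poly_to_fls p = poly (map_poly fls_const p) fls_X_inv"
proof -
  have d: "degree (map_poly fls_const p) = degree p"
    by (rule degree_map_poly) simp
  show ?thesis unfolding poly_to_fls_def poly_altdef d
    by (simp add: coeff_map_poly)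
qed

lemma pf_0 [simp]: "poly_to_fls 0 = 0"
  by (simp add: pf_poly)

lemma pf_pCons: "poly_to_fls (pCons c p) = fls_const c + fls_X_inv * poly_to_fls p"
  by (simp add: pf_poly map_poly_pCons)

lemma pf_const [simp]: "poly_to_fls [:c:] = fls_const c"
  by (simp add: pf_pCons)

lemma pf_add: "poly_to_fls (p + q) = poly_to_fls p + poly_to_fls q"
proof (induction p q rule: poly_induct2)
  case 0 then show ?case by simp
next
  case (pCons a p b q)
  then show ?case by (simp add: pf_pCons fls_const_add' algebra_simps)
qed

lemma pf_smult: "poly_to_fls (smult c p) = fls_const c * poly_to_fls p"
  by (induction p) (simp_all add: pf_pCons algebra_simps)

lemma pf_uminus: "poly_to_fls (- p) = - poly_to_fls p"
  using pf_smult[of "-1" p] by simp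

lemma pf_diff: "poly_to_fls (p - q) = poly_to_fls p - poly_to_fls q"
  using pf_add[of p "-q"] by (simp add: pf_uminus)

lemma pf_mult: "poly_to_fls (p * q) = poly_to_fls p * poly_to_fls q"
proof (induction p)
  case 0 then show ?case by simp
next
  case (pCons a p)
  have "pCons a p * q = smult a q + pCons 0 (p * q)" by simp
  then show ?case using pCons by (simp add: pf_add pf_smult pf_pCons algebra_simps)
qed

lemma pf_1 [simp]: "poly_to_fls 1 = 1"
  using pf_const[of 1] by (simp add: one_pCons)

lemma pf_monom: "poly_to_fls (monom c j) = fls_const c * fls_X_inv ^ j"
  by (induction j) (simp_all add: monom_Suc pf_pCons monom_0 algebra_simps)

lemma pf_nth: "poly_to_fls p $$ n = (if n \<le> 0 then coeff p (nat (-n)) else 0)"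
proof (induction p arbitrary: n)
  case 0 then show ?case by simp
next
  case (pCons a p)
  have X: "(fls_X_inv * g) $$ n = g $$ (n + 1)" for g :: "'a fls"
    using fls_X_inv_power_times_conv_shift(1)[of 1 g] by simp
  show ?case
    by (auto simp: pf_pCons X pCons coeff_pCons split: nat.split) (simp_all add: nat_diff_distrib)
qed

definition vge :: "'a::field fls \<Rightarrow> int \<Rightarrow> bool" where
  "vge x n \<longleftrightarrow> (\<forall>k<n. x $$ k = 0)"

lemma vge_iff: "vge x n \<longleftrightarrow> x = 0 \<or> n \<le> fls_subdegree x"
  unfolding vge_def
proof safe
  assume "\<forall>k<n. x $$ k = 0" "\<not> n \<le> fls_subdegree x"
  then show "x = 0" using fls_subdegree_geI[of x n] by auto
qed auto

lemma vge_0 [simp]: "vge 0 n" by (simp add: vge_def)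

lemma vge_add: "vge x n \<Longrightarrow> vge y n \<Longrightarrow> vge (x + y) n"
  by (simp add: vge_def)
lemma vge_uminus [simp]: "vge (- x) n \<longleftrightarrow> vge x n"
  by (simp add: vge_def)
lemma vge_diff: "vge x n \<Longrightarrow> vge y n \<Longrightarrow> vge (x - y) n"
  by (simp add: vge_def)
lemma vge_mono: "vge x n \<Longrightarrow> m \<le> n \<Longrightarrow> vge x m"
  by (simp add: vge_def)

lemma vge_mult: "vge x m \<Longrightarrow> vge y n \<Longrightarrow> vge (x * y) (m + n)"
  unfolding vge_iff by (cases "x = 0"; cases "y = 0") auto

lemma vge_sum: "finite A \<Longrightarrow> (\<And>i. i \<in> A \<Longrightarrow> vge (g i) n) \<Longrightarrow> vge (\<Sum>i\<in>A. g i) n"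
  by (induction A rule: finite_induct) (auto intro: vge_add)

lemma vge_const: "vge (fls_const c) 0"
  by (simp add: vge_def)

lemma vge_Xpow: "vge (fls_X_inv ^ j) (- int j)"
  by (simp add: vge_def)

lemma vge_pf: "vge (poly_to_fls p) (- int (degree p))"
  by (auto simp: vge_def pf_nth coeff_eq_0)

lemma vge_pow: "vge x m \<Longrightarrow> vge (x ^ N) (int N * m)"
proof (induction N)
  case 0 then show ?case by (simp add: vge_def)
next
  case (Suc N) then show ?case using vge_mult[of x m "x^N" "int N * m"] by (simp add: algebra_simps)
qed

lemma pf_lead: "p \<noteq> 0 \<Longrightarrow> poly_to_fls p $$ (- int (degree p)) \<noteq> 0"
  by (simp add: pf_nth)

lemma pf_eq0: "poly_to_fls p = 0 \<Longrightarrow> p = 0"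
  using pf_lead by fastforce

lemma vge_pf_coeff: "vge (poly_to_fls p) n \<Longrightarrow> int i > - n \<Longrightarrow> coeff p i = 0"
  unfolding vge_def using pf_nth[of p "- int i"] by auto


lemma polypart:
  assumes "vge x n"
  shows "\<exists>p y. x = poly_to_fls p + y \<and> vge y 1 \<and> (\<forall>i. int i > - n \<longrightarrow> coeff p i = 0)"
proof -
  define p where "p = fls_prpart x + [:x $$ 0:]"
  have cp: "coeff p i = x $$ (- int i)" for i
    by (cases i) (auto simp: p_def)
  have "vge (x - poly_to_fls p) 1"
    unfolding vge_def by (auto simp: pf_nth cp)
  moreover have "\<forall>i. int i > - n \<longrightarrow> coeff p i = 0"
    using assms by (auto simp: cp vge_def)
  ultimately show ?thesis by (intro exI[of _ p] exI[of _ "x - poly_to_fls p"]) auto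
qed

lemma pf_sum_ext:
  assumes "degree p \<le> n"
  shows "poly_to_fls p = (\<Sum>j\<le>n. fls_const (coeff p j) * fls_X_inv ^ j)"
  unfolding poly_to_fls_def
  by (rule sum.mono_neutral_left) (use assms in \<open>auto simp: coeff_eq_0\<close>)

lemma card_ge2: "CARD('a::{field,finite}) \<ge> 2"
proof -
  have "card {0::'a, 1} = 2" by simp
  moreover have "card {0::'a, 1} \<le> CARD('a)" by (rule card_mono) auto
  ultimately show ?thesis by simp
qed

lemma absv_le_iff:
  fixes x :: "'a::{field,finite} fls"
  shows "absv x \<le> real CARD('a) powr (- of_int n) \<longleftrightarrow> vge x n"
proof (cases "x = 0")
  case True then show ?thesis by (simp add: absv_def)
next
  case False
  have q: "real CARD('a) > 1" using card_ge2[where 'a='a] by simp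
  show ?thesis using False q by (simp add: absv_def vge_iff)
qed

lemma absv_less_iff:
  fixes x :: "'a::{field,finite} fls"
  shows "absv x < real CARD('a) powr (- of_int n) \<longleftrightarrow> vge x (n + 1)"
proof (cases "x = 0")
  case True then show ?thesis by (simp add: absv_def)
next
  case False
  have q: "real CARD('a) > 1" using card_ge2[where 'a='a] by simp
  show ?thesis using False q by (simp add: absv_def vge_iff) linarith
qed


locale qunit =
  fixes a :: "'a::{field,finite} poly" and b :: 'a and f :: "'a fls"
  assumes monic: "lead_coeff a = 1"
    and deg: "degree a \<ge> 1"
    and bnz: "b \<noteq> 0"
    and root: "f ^ 2 - poly_to_fls a * f - fls_const b = 0"
    and absf: "absv f = real CARD('a) ^ degree a"
begin

abbreviation "d \<equiv> degree a"
definition "fc = poly_to_fls a - f"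
definition "E u v = poly_to_fls u + poly_to_fls v * f"
definition "E' u v = poly_to_fls u + poly_to_fls v * fc"
definition "Pr x x' \<longleftrightarrow> (\<exists>u v. x = E u v \<and> x' = E' u v)"
definition "G k = {z. \<exists>z'. Pr z z' \<and> vge z' k}"

lemma f_sq: "f * f = poly_to_fls a * f + fls_const b"
  using root by (simp add: power2_eq_square algebra_simps)

lemma fc_sq: "fc * fc = poly_to_fls a * fc + fls_const b"
  using f_sq unfolding fc_def by (simp add: algebra_simps)

lemma f_fc: "f * fc = - fls_const b"
  using f_sq unfolding fc_def by (simp add: algebra_simps)

lemma f_nz: "f \<noteq> 0"
  using f_fc bnz by auto

lemma subdeg_f: "fls_subdegree f = - int d"
proof -
  have q: "real CARD('a) > 1" using card_ge2[where 'a='a] by simp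
  have "real CARD('a) powr (- of_int (fls_subdegree f)) = real CARD('a) powr (real d)"
    using absf f_nz q by (simp add: absv_def powr_realpow)
  then have "- of_int (fls_subdegree f) = (real d)"
    using q by (simp add: powr_inj)
  then show ?thesis by linarith
qed

lemma fc_nz: "fc \<noteq> 0"
  using f_fc bnz by auto

lemma subdeg_fc: "fls_subdegree fc = int d"
proof -
  have "fls_subdegree (f * fc) = 0" using f_fc by simp
  then show ?thesis using f_nz fc_nz subdeg_f by simp
qed

lemma vge_f: "vge f (- int d)" by (simp add: vge_iff subdeg_f)
lemma vge_fc: "vge fc (int d)" by (simp add: vge_iff subdeg_fc)

definition "cb = fls_const (- 1 / b)"

lemma inv_f: "inverse f = cb * fc"
proof -
  have "f * (cb * fc) = 1" using bnz
    by (simp add: cb_def mult.left_commute[of f] f_fc)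
  then show ?thesis by (metis inverse_unique)
qed

lemma cb_f_fc: "cb * fc * f = 1"
  using inv_f f_nz by (metis mult.commute right_inverse)

lemma vge_cb: "vge cb 0" by (simp add: cb_def vge_const)

lemma sqrtD_eq: "sqrtD f a = f - fc"
proof (cases "CHAR('a) = 2")
  case True
  have "(2::'a) = of_nat CHAR('a)" using True by simp
  then have two: "(2::'a) = 0" by simp
  have "(2::'a fls) = fls_const 2" by (metis fls_const_numeral)
  then have "(2::'a fls) = 0" using two by simp
  then have "poly_to_fls a + poly_to_fls a = 0"
    by (metis mult_2 mult_zero_left)
  then have "poly_to_fls a = 2 * f - poly_to_fls a"
    using \<open>(2::'a fls) = 0\<close> by (simp add: eq_neg_iff_add_eq_0)
  then show ?thesis using True by (simp add: sqrtD_def fc_def)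
next
  case False
  then show ?thesis by (simp add: sqrtD_def fc_def)
qed

lemma prod_formula:
  assumes "g * g = poly_to_fls a * g + fls_const b"
  shows "(poly_to_fls u + poly_to_fls v * g) * (poly_to_fls u' + poly_to_fls v' * g)
       = poly_to_fls (u * u' + smult b (v * v')) + poly_to_fls (u * v' + u' * v + a * v * v') * g"
proof -
  have "(poly_to_fls u + poly_to_fls v * g) * (poly_to_fls u' + poly_to_fls v' * g)
      = poly_to_fls u * poly_to_fls u' + (poly_to_fls u * poly_to_fls v' + poly_to_fls u' * poly_to_fls v) * g
        + poly_to_fls v * poly_to_fls v' * (g * g)"
    by (simp add: algebra_simps)
  also have "\<dots> = poly_to_fls (u * u' + smult b (v * v')) + poly_to_fls (u * v' + u' * v + a * v * v') * g"
    unfolding assms by (simp add: pf_add pf_mult pf_smult algebra_simps)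
  finally show ?thesis .
qed

lemma Pr_mult: "Pr x x' \<Longrightarrow> Pr y y' \<Longrightarrow> Pr (x * y) (x' * y')"
  unfolding Pr_def E_def E'_def
  apply (elim exE conjE)
  subgoal for u u' v v'
    apply (rule exI[of _ "u * u' + smult b (v * v')"], rule exI[of _ "u * v' + u' * v + a * v * v'"])
    using prod_formula[OF f_sq, of u v u' v'] prod_formula[OF fc_sq, of u v u' v'] by simp
  done

lemma Pr_add: "Pr x x' \<Longrightarrow> Pr y y' \<Longrightarrow> Pr (x + y) (x' + y')"
  unfolding Pr_def E_def E'_def
  apply (elim exE conjE)
  subgoal for u u' v v'
    by (rule exI[of _ "u + u'"], rule exI[of _ "v + v'"]) (simp add: pf_add algebra_simps)
  done

lemma Pr_const: "Pr (fls_const c) (fls_const c)"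
  unfolding Pr_def E_def E'_def by (rule exI[of _ "[:c:]"], rule exI[of _ 0]) simp

lemma Pr_pf: "Pr (poly_to_fls p) (poly_to_fls p)"
  unfolding Pr_def E_def E'_def by (rule exI[of _ p], rule exI[of _ 0]) simp

lemma Pr_f: "Pr f fc"
  unfolding Pr_def E_def E'_def by (rule exI[of _ 0], rule exI[of _ 1]) simp

lemma Pr_swap: "Pr x x' \<Longrightarrow> Pr x' x"
  unfolding Pr_def E_def E'_def
  apply (elim exE conjE)
  subgoal for u v by (rule exI[of _ "u + v * a"], rule exI[of _ "- v"]) (simp add: pf_add pf_mult pf_uminus fc_def algebra_simps)
  done

lemma Pr_fc: "Pr fc f" by (rule Pr_swap[OF Pr_f])

lemma Pr_uminus: "Pr x x' \<Longrightarrow> Pr (- x) (- x')"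
  using Pr_mult[OF Pr_const[of "-1"], of x x'] by simp

lemma Pr_diff: "Pr x x' \<Longrightarrow> Pr y y' \<Longrightarrow> Pr (x - y) (x' - y')"
  using Pr_add[OF _ Pr_uminus] by (metis diff_conv_add_uminus)

lemma Pr_pow: "Pr x x' \<Longrightarrow> Pr (x ^ N) (x' ^ N)"
proof (induction N)
  case 0 then show ?case using Pr_const[of 1] by simp
next
  case (Suc N) then show ?case using Pr_mult by simp
qed

lemma Pr_cb: "Pr cb cb" unfolding cb_def by (rule Pr_const)

lemma Pr_sum: "finite A \<Longrightarrow> (\<And>i. i \<in> A \<Longrightarrow> Pr (g i) (g' i)) \<Longrightarrow> Pr (\<Sum>i\<in>A. g i) (\<Sum>i\<in>A. g' i)"
proof (induction A rule: finite_induct)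
  case empty then show ?case using Pr_const[of 0] by simp
next
  case (insert x F) then show ?case using Pr_add by simp
qed

lemma G_add: "x \<in> G k \<Longrightarrow> y \<in> G k \<Longrightarrow> x + y \<in> G k"
  unfolding G_def using Pr_add vge_add by blast

lemma G_mult: "x \<in> G m \<Longrightarrow> y \<in> G n \<Longrightarrow> x * y \<in> G (m + n)"
  unfolding G_def using Pr_mult vge_mult by blast

lemma G_mono: "x \<in> G k \<Longrightarrow> m \<le> k \<Longrightarrow> x \<in> G m"
  unfolding G_def using vge_mono by blast

lemma G_const: "fls_const c \<in> G 0"
  unfolding G_def using Pr_const vge_const by blast

lemma G_sum: "finite A \<Longrightarrow> (\<And>i. i \<in> A \<Longrightarrow> g i \<in> G k) \<Longrightarrow> (\<Sum>i\<in>A. g i) \<in> G k"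
proof (induction A rule: finite_induct)
  case empty then show ?case using G_mono[OF G_const[of 0]] by (simp add: G_def) (use Pr_const[of 0] in force)
next
  case (insert x F) then show ?case using G_add by simp
qed

lemma G_gen: "f * fls_X_inv ^ j \<in> G (int d - int j)"
proof -
  have "Pr (fls_X_inv ^ j) (fls_X_inv ^ j)" using Pr_pf[of "monom 1 j"] by (simp add: pf_monom)
  then have "Pr (f * fls_X_inv ^ j) (fc * fls_X_inv ^ j)" using Pr_mult Pr_f by blast
  moreover have "vge (fc * fls_X_inv ^ j) (int d - int j)"
    using vge_mult[OF vge_fc vge_Xpow[of j]] by simp
  ultimately show ?thesis unfolding G_def by blast
qed

lemma Ainf_G: "z \<in> A_inf1 f d \<Longrightarrow> z \<in> G 0"
proof (induction rule: A_inf1.induct)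
  case (const c) then show ?case by (rule G_const)
next
  case (gen j) then show ?case using G_gen[of j] G_mono by fastforce
next
  case (add x y) then show ?case using G_add by blast
next
  case (mult x y) then show ?case using G_mult by fastforce
qed

lemma ideal_G:
  assumes "z \<in> ideal_a f d i" "i < d"
  shows "z \<in> G (int d - int i)"
proof -
  obtain r where z: "z = (\<Sum>j\<le>i. r j * (f * fls_X_inv ^ j))" and r: "\<forall>j\<le>i. r j \<in> A_inf1 f d"
    using assms(1) unfolding ideal_a_def by blast
  show ?thesis unfolding z
  proof (rule G_sum)
    fix j assume j: "j \<in> {..i}"
    have "r j * (f * fls_X_inv ^ j) \<in> G (0 + (int d - int j))"
      using G_mult[OF Ainf_G G_gen] r j by auto
    then show "r j * (f * fls_X_inv ^ j) \<in> G (int d - int i)" using G_mono j by fastforce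
  qed simp
qed

end


context qunit begin

lemma reduction:
  assumes v: "vge (E' u v) k" and k0: "0 \<le> k" and kd: "k \<le> int d"
  shows "\<exists>c r. vge (E' (u - [:c:]) (v - r)) (int d) \<and> degree r < d \<and>
            (1 \<le> k \<longrightarrow> c = 0 \<and> degree r \<le> nat (int d - k))"
proof -
  define e where "e = f * E' u v"
  have ffc: "f * (poly_to_fls v * fc) = poly_to_fls v * (f * fc)" by (simp add: ac_simps)
  have "vge e (- int d + k)" using vge_mult[OF vge_f v] e_def by simp
  from polypart[OF this] obtain p y where e: "e = poly_to_fls p + y" "vge y 1"
    and cp: "\<forall>i. int i > int d - k \<longrightarrow> coeff p i = 0" by auto
  define c where "c = coeff p d"
  define p' where "p' = p - smult c a"
  have "degree p' \<le> d - 1"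
  proof (rule degree_le, intro allI impI)
    fix i assume i: "d - 1 < i"
    show "coeff p' i = 0"
    proof (cases "i = d")
      case True then show ?thesis using monic by (simp add: p'_def c_def)
    next
      case False
      then have "i > d" using i deg by simp
      then show ?thesis using cp k0 by (simp add: p'_def coeff_eq_0)
    qed
  qed
  then have dp': "degree p' < d" using deg by simp
  define r where "r = smult (- 1 / b) p'"
  have dr: "degree r \<le> degree p'" unfolding r_def by (rule degree_smult_le)
  have k1: "c = 0 \<and> degree r \<le> nat (int d - k)" if "1 \<le> k"
  proof -
    have c0: "c = 0" using cp that by (simp add: c_def)
    have "degree p \<le> nat (int d - k)"
      by (rule degree_le) (use cp in auto)
    then show ?thesis using c0 dr by (simp add: p'_def)
  qed
  have cbm: "fls_const b * fls_const (-1/b) = -1" using bnz by simp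
  have "poly_to_fls r = fls_const (-1/b) * poly_to_fls p'" unfolding r_def by (rule pf_smult)
  then have "fls_const b * poly_to_fls r = (fls_const b * fls_const (-1/b)) * poly_to_fls p'"
    by (simp only: mult.assoc)
  moreover have "poly_to_fls p' = poly_to_fls p - fls_const c * poly_to_fls a"
    by (simp add: p'_def pf_diff pf_smult)
  ultimately have "fls_const b * poly_to_fls r = (fls_const b * fls_const (-1/b)) * (poly_to_fls p - fls_const c * poly_to_fls a)"
    by simp
  then have cbr: "fls_const b * poly_to_fls r = - poly_to_fls p + fls_const c * poly_to_fls a"
    unfolding cbm by (simp add: algebra_simps)
  have "f * E' (u - [:c:]) (v - r) = f * E' u v - fls_const c * f - poly_to_fls r * (f * fc)"
    by (simp add: E'_def pf_diff algebra_simps)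
  also have "\<dots> = e - fls_const c * f + fls_const b * poly_to_fls r"
    using f_fc e_def by simp
  also have "\<dots> = y + fls_const c * fc"
    unfolding cbr e(1) fc_def by (simp add: algebra_simps)
  finally have key: "f * E' (u - [:c:]) (v - r) = y + fls_const c * fc" .
  have "vge (fls_const c * fc) (0 + int d)" by (rule vge_mult[OF vge_const vge_fc])
  then have "vge (y + fls_const c * fc) 1" using deg e(2) by (intro vge_add) (auto intro: vge_mono)
  then have "vge (cb * fc * (f * E' (u - [:c:]) (v - r))) (0 + int d + 1)"
    using key vge_mult[OF vge_mult[OF vge_cb vge_fc]] by metis
  moreover have "cb * fc * (f * E' (u - [:c:]) (v - r)) = E' (u - [:c:]) (v - r)"
    using cb_f_fc by (metis mult.assoc mult_1)
  ultimately have "vge (E' (u - [:c:]) (v - r)) (int d)"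
    by (auto intro: vge_mono)
  then show ?thesis using k1 dr dp' by (intro exI[of _ c] exI[of _ r]) auto
qed

lemma div_formula:
  assumes "g * g = poly_to_fls a * g + fls_const b"
  shows "(poly_to_fls (v' - smult (1/b) (a * u')) + poly_to_fls (smult (1/b) u') * g) * g
        = poly_to_fls u' + poly_to_fls v' * g"
proof -
  have "(poly_to_fls (v' - smult (1/b) (a * u')) + poly_to_fls (smult (1/b) u') * g) * g
      = poly_to_fls v' * g + fls_const (1/b) * poly_to_fls u' * (g * g - poly_to_fls a * g)"
    by (simp add: pf_diff pf_smult pf_mult algebra_simps)
  also have "\<dots> = poly_to_fls v' * g + poly_to_fls u'"
    using bnz by (simp add: assms mult.assoc[symmetric])
  finally show ?thesis by simp
qed

lemma shift:
  assumes "vge (E' u' v') (int d)"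
  shows "E u' v' = E (v' - smult (1/b) (a * u')) (smult (1/b) u') * f
       \<and> vge (E' (v' - smult (1/b) (a * u')) (smult (1/b) u')) 0"
proof -
  define z where "z = E' (v' - smult (1/b) (a * u')) (smult (1/b) u')"
  have z: "z * fc = E' u' v'" unfolding z_def E'_def by (rule div_formula[OF fc_sq])
  have "z = (z * fc) * (cb * f)" using cb_f_fc by (simp add: ac_simps)
  then have "vge z (int d + (0 + - int d))"
    using z vge_mult[OF assms vge_mult[OF vge_cb vge_f]] by metis
  then show ?thesis using div_formula[OF f_sq] unfolding z_def E_def by simp
qed

lemma Ainf_sum: "finite A \<Longrightarrow> (\<And>i. i \<in> A \<Longrightarrow> g i \<in> A_inf1 f d) \<Longrightarrow> (\<Sum>i\<in>A. g i) \<in> A_inf1 f d"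
proof (induction A rule: finite_induct)
  case empty then show ?case using A_inf1.const[of 0] by simp
next
  case (insert x F)
  then have "g x \<in> A_inf1 f d" "sum g F \<in> A_inf1 f d" by auto
  then show ?case using insert(1,2) by (simp add: A_inf1.add)
qed

lemma Ainf_polyf:
  assumes "degree r < d"
  shows "poly_to_fls r * f \<in> A_inf1 f d"
proof -
  have "poly_to_fls r * f = (\<Sum>j\<le>degree r. fls_const (coeff r j) * (f * fls_X_inv ^ j))"
    unfolding poly_to_fls_def sum_distrib_right by (rule sum.cong) (simp_all add: ac_simps)
  also have "\<dots> \<in> A_inf1 f d"
    by (rule Ainf_sum) (use assms in \<open>auto intro!: A_inf1.mult A_inf1.const A_inf1.gen\<close>)
  finally show ?thesis .
qed

lemma f_Ainf: "f \<in> A_inf1 f d"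
  using A_inf1.gen[of 0 d f] deg by simp

lemma char_A: "vge (E' u v) 0 \<Longrightarrow> E u v \<in> A_inf1 f d"
proof (induction "degree v" arbitrary: u v rule: less_induct)
  case less
  show ?case
  proof (cases "degree v < d")
    case True
    have "vge (poly_to_fls v * fc) (- int (degree v) + int d)"
      by (rule vge_mult[OF vge_pf vge_fc])
    then have "vge (poly_to_fls v * fc) 0" using True by (auto intro: vge_mono)
    then have "vge (E' u v - poly_to_fls v * fc) 0" using less.prems by (intro vge_diff)
    then have pu: "vge (poly_to_fls u) 0" by (simp add: E'_def)
    have "poly_to_fls u = fls_const (coeff u 0)"
    proof (rule fls_eqI)
      fix n
      show "poly_to_fls u $$ n = fls_const (coeff u 0) $$ n"
        using vge_pf_coeff[OF pu, of "nat (-n)"] by (auto simp: pf_nth)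
    qed
    then have "E u v = fls_const (coeff u 0) + poly_to_fls v * f" by (simp add: E_def)
    then show ?thesis using Ainf_polyf[OF True] A_inf1.add A_inf1.const by metis
  next
    case False
    then have dv: "d \<le> degree v" by simp
    have du: "degree u \<le> degree v - d"
    proof (rule ccontr)
      assume "\<not> degree u \<le> degree v - d"
      then have gt: "degree u > degree v - d" by simp
      then have u0: "u \<noteq> 0" by auto
      have "vge (poly_to_fls v * fc) (- int (degree v) + int d)"
        by (rule vge_mult[OF vge_pf vge_fc])
      then have "(poly_to_fls v * fc) $$ (- int (degree u)) = 0"
        using gt dv unfolding vge_def by auto
      then have "E' u v $$ (- int (degree u)) \<noteq> 0"
        using pf_lead[OF u0] by (simp add: E'_def)
      moreover have "- int (degree u) < 0" using gt by simp
      ultimately show False using less.prems unfolding vge_def by auto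
    qed
    obtain c r where cr: "vge (E' (u - [:c:]) (v - r)) (int d)" "degree r < d"
      using reduction[OF less.prems] deg by auto
    define u1 where "u1 = v - r - smult (1/b) (a * (u - [:c:]))"
    define v1 where "v1 = smult (1/b) (u - [:c:])"
    have sh: "E (u - [:c:]) (v - r) = E u1 v1 * f" "vge (E' u1 v1) 0"
      using shift[OF cr(1)] unfolding u1_def v1_def by auto
    have "degree v1 \<le> degree (u - [:c:])" unfolding v1_def by (rule degree_smult_le)
    also have "\<dots> \<le> degree u" by (rule degree_diff_le) auto
    finally have "degree v1 < degree v" using du dv deg by linarith
    then have "E u1 v1 \<in> A_inf1 f d" using less.hyps sh(2) by blast
    then have "E u1 v1 * f \<in> A_inf1 f d" using f_Ainf A_inf1.mult by blast
    moreover have "E u v = (fls_const c + poly_to_fls r * f) + E u1 v1 * f"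
      using sh(1) by (simp add: E_def pf_diff algebra_simps)
    ultimately show ?thesis
      using Ainf_polyf[OF cr(2)] A_inf1.add A_inf1.const by metis
  qed
qed

lemma char_I:
  assumes l: "l < d" and v: "vge (E' u v) (int l + 1)"
  shows "E u v \<in> ideal_a f d (d - 1 - l)"
proof -
  obtain c r where cr: "vge (E' (u - [:c:]) (v - r)) (int d)" "degree r < d"
      "c = 0" "degree r \<le> nat (int d - (int l + 1))"
    using reduction[OF v] l by auto
  define i where "i = d - 1 - l"
  have dri: "degree r \<le> i" using cr(4) l unfolding i_def by linarith
  define u1 where "u1 = v - r - smult (1/b) (a * u)"
  define v1 where "v1 = smult (1/b) u"
  have sh: "E u (v - r) = E u1 v1 * f" "vge (E' u1 v1) 0"
    using shift[of u "v - r"] cr(1) cr(3) unfolding u1_def v1_def by auto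
  have z1: "E u1 v1 \<in> A_inf1 f d" using char_A[OF sh(2)] .
  define R where "R j = (if j = 0 then E u1 v1 else 0) + fls_const (coeff r j)" for j
  have RA: "\<forall>j\<le>i. R j \<in> A_inf1 f d"
    unfolding R_def using z1 A_inf1.add A_inf1.const by (metis add_0)
  have "(\<Sum>j\<le>i. R j * (f * fls_X_inv ^ j))
      = (\<Sum>j\<le>i. (if j = 0 then E u1 v1 * (f * fls_X_inv ^ j) else 0)) + (\<Sum>j\<le>i. fls_const (coeff r j) * (f * fls_X_inv ^ j))"
    unfolding R_def by (subst sum.distrib[symmetric], rule sum.cong) (auto simp: distrib_right)
  also have "(\<Sum>j\<le>i. (if j = 0 then E u1 v1 * (f * fls_X_inv ^ j) else 0)) = E u1 v1 * f"
    by simp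
  also have "(\<Sum>j\<le>i. fls_const (coeff r j) * (f * fls_X_inv ^ j)) = poly_to_fls r * f"
    unfolding pf_sum_ext[OF dri] sum_distrib_right by (rule sum.cong) (simp_all add: ac_simps)
  also have "E u v = E u (v - r) + poly_to_fls r * f" by (simp add: E_def pf_diff algebra_simps)
  then have "E u1 v1 * f + poly_to_fls r * f = E u v" using sh(1) by simp
  finally have eq: "E u v = (\<Sum>j\<le>i. R j * (f * fls_X_inv ^ j))" by simp
  show ?thesis unfolding ideal_a_def i_def[symmetric]
    by (rule CollectI, rule exI[of _ R]) (use eq RA in simp)
qed

lemma G_ideal:
  assumes "l < d" "z \<in> G (int l + 1)"
  shows "z \<in> ideal_a f d (d - 1 - l)"
  using assms char_I unfolding G_def Pr_def by blast

end


lemma absv_nonneg: "absv x \<ge> 0"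
  by (simp add: absv_def)

lemma distA_lt:
  assumes "dist_A x < e"
  shows "\<exists>\<mu>. absv (x - poly_to_fls \<mu>) < e"
proof -
  have "Inf ((\<lambda>a. absv (x - a)) ` range poly_to_fls) < e"
    using assms unfolding dist_A_def A_set_def .
  from cInf_lessD[OF _ this] show ?thesis by auto
qed

lemma distA_eq:
  fixes x :: "'a::{field,finite} fls"
  assumes v: "vge (x - poly_to_fls \<mu>) 1"
  shows "dist_A x = absv (x - poly_to_fls \<mu>)"
  unfolding dist_A_def A_set_def
proof (rule cInf_eq_minimum)
  show "absv (x - poly_to_fls \<mu>) \<in> (\<lambda>a. absv (x - a)) ` range poly_to_fls" by auto
next
  fix t assume "t \<in> (\<lambda>a. absv (x - a)) ` range poly_to_fls"
  then obtain \<mu>' where t: "t = absv (x - poly_to_fls \<mu>')" by auto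
  show "absv (x - poly_to_fls \<mu>) \<le> t"
  proof (cases "\<mu>' = \<mu>")
    case True then show ?thesis using t by simp
  next
    case False
    have nv: "\<not> vge (x - poly_to_fls \<mu>') 1"
    proof
      assume "vge (x - poly_to_fls \<mu>') 1"
      then have "vge ((x - poly_to_fls \<mu>') - (x - poly_to_fls \<mu>)) 1" using v by (rule vge_diff)
      then have "vge (poly_to_fls (\<mu> - \<mu>')) 1" by (simp add: pf_diff)
      moreover have "\<mu> - \<mu>' \<noteq> 0" using False by simp
      ultimately show False using pf_lead[of "\<mu> - \<mu>'"] unfolding vge_def by force
    qed
    have "absv (x - poly_to_fls \<mu>) \<le> real CARD('a) powr (- of_int 1)"
      using v absv_le_iff by blast
    moreover have "\<not> absv (x - poly_to_fls \<mu>') \<le> real CARD('a) powr (- of_int 1)"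
      using nv absv_le_iff by blast
    ultimately show ?thesis using t by linarith
  qed
qed

lemma hd_bound:
  fixes S S' :: "'a::{field,finite} fls set"
  assumes "S \<noteq> {}" "\<forall>x\<in>S. \<exists>y\<in>S'. absv (x - y) \<le> B" "\<forall>y\<in>S'. \<exists>x\<in>S. absv (x - y) \<le> B"
  shows "0 \<le> hausdorff_dist S S' \<and> hausdorff_dist S S' \<le> ereal B"
proof
  obtain x0 where x0: "x0 \<in> S" using assms(1) by auto
  have "0 \<le> (INF y\<in>S'. ereal (absv (x0 - y)))"
    by (rule INF_greatest) (simp add: absv_nonneg)
  also have "\<dots> \<le> (SUP x\<in>S. INF y\<in>S'. ereal (absv (x - y)))"
    using x0 by (rule SUP_upper)
  finally show "0 \<le> hausdorff_dist S S'" unfolding hausdorff_dist_def by (rule order.trans) simp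
next
  have "(SUP x\<in>S. INF y\<in>S'. ereal (absv (x - y))) \<le> ereal B"
  proof (rule SUP_least)
    fix x assume "x \<in> S"
    then obtain y where "y \<in> S'" "absv (x - y) \<le> B" using assms(2) by auto
    then show "(INF y\<in>S'. ereal (absv (x - y))) \<le> ereal B" by (intro INF_lower2) auto
  qed
  moreover have "(SUP y\<in>S'. INF x\<in>S. ereal (absv (x - y))) \<le> ereal B"
  proof (rule SUP_least)
    fix y assume "y \<in> S'"
    then obtain x where "x \<in> S" "absv (x - y) \<le> B" using assms(3) by auto
    then show "(INF x\<in>S. ereal (absv (x - y))) \<le> ereal B" by (intro INF_lower2) auto
  qed
  ultimately show "hausdorff_dist S S' \<le> ereal B" unfolding hausdorff_dist_def by simp
qed


context qunit begin

lemma eps_eq: "inverse (real CARD('a) ^ m) = real CARD('a) powr (- of_int (int m))"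
proof -
  have q: "real CARD('a) > 0" using card_ge2[where 'a='a] by simp
  then show ?thesis by (simp add: powr_minus powr_realpow)
qed

lemma NdN: "int N \<le> int N * int d"
proof -
  have "int N * 1 \<le> int N * int d" by (rule mult_left_mono) (use deg in auto)
  then show ?thesis by simp
qed

lemma vge_cbfc_pow: "vge ((cb * fc) ^ N) (int N * int d)"
  using vge_pow[OF vge_mult[OF vge_cb vge_fc], of N] by simp

lemma dir1:
  assumes l: "l < d" and lam: "lam \<in> Lambda (inverse (real CARD('a) ^ (d * N + l))) f"
  shows "\<exists>w\<in>ideal_a f d (d - 1 - l). vge (inverse f ^ N * sqrtD f a * lam - w) (int N)"
proof -
  obtain p where p: "lam = poly_to_fls p" and dl: "dist_A (lam * f) < inverse (real CARD('a) ^ (d * N + l))"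
    using lam unfolding Lambda_def A_set_def by auto
  obtain \<mu> where "absv (lam * f - poly_to_fls \<mu>) < real CARD('a) powr (- of_int (int (d * N + l)))"
    using distA_lt[OF dl] eps_eq by auto
  then have vd: "vge (lam * f - poly_to_fls \<mu>) (int (d * N + l) + 1)" using absv_less_iff by blast
  define \<delta> where "\<delta> = lam * f - poly_to_fls \<mu>"
  define \<delta>' where "\<delta>' = lam * fc - poly_to_fls \<mu>"
  have P\<delta>: "Pr \<delta> \<delta>'" unfolding \<delta>_def \<delta>'_def p by (intro Pr_diff Pr_mult Pr_pf Pr_f)
  define y where "y = f ^ N * \<delta>"
  define y' where "y' = fc ^ N * \<delta>'"
  have "Pr y y'" unfolding y_def y'_def by (intro Pr_mult Pr_pow Pr_f P\<delta>)
  then have Py: "Pr y' y" by (rule Pr_swap)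
  define w where "w = - (cb ^ N * y')"
  have Pw: "Pr w (- (cb ^ N * y))" unfolding w_def by (intro Pr_uminus Pr_mult Pr_pow Pr_cb Py)
  have "vge (cb ^ N * y) (int N * 0 + (int N * (- int d) + (int (d * N + l) + 1)))"
    unfolding y_def using vd \<delta>_def by (intro vge_mult vge_pow vge_cb vge_f) auto
  then have "vge (- (cb ^ N * y)) (int l + 1)" by (simp add: algebra_simps)
  then have "w \<in> G (int l + 1)" using Pw unfolding G_def by blast
  then have wI: "w \<in> ideal_a f d (d - 1 - l)" by (rule G_ideal[OF l])
  have "inverse f ^ N * sqrtD f a * lam = (cb * fc) ^ N * (\<delta> - \<delta>')"
    unfolding inv_f sqrtD_eq \<delta>_def \<delta>'_def by (simp add: algebra_simps)
  also have "\<dots> = (cb * fc) ^ N * \<delta> - cb ^ N * y'"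
    unfolding y'_def by (simp add: power_mult_distrib algebra_simps)
  finally have "inverse f ^ N * sqrtD f a * lam - w = (cb * fc) ^ N * \<delta>"
    unfolding w_def by simp
  moreover have "vge ((cb * fc) ^ N * \<delta>) (int N * int d + (int (d * N + l) + 1))"
    using vge_mult[OF vge_cbfc_pow vd[folded \<delta>_def]] .
  moreover have "int N \<le> int N * int d + (int (d * N + l) + 1)"
    using NdN[of N] by simp
  ultimately have "vge (inverse f ^ N * sqrtD f a * lam - w) (int N)"
    using vge_mono by metis
  then show ?thesis using wI by blast
qed

lemma dir2:
  assumes l: "l < d" and w: "w \<in> ideal_a f d (d - 1 - l)"
  shows "\<exists>lam \<in> Lambda (inverse (real CARD('a) ^ (d * N + l))) f.
           vge (inverse f ^ N * sqrtD f a * lam - w) (int N)"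
proof -
  have "w \<in> G (int d - int (d - 1 - l))" by (rule ideal_G[OF w]) (use l in simp)
  moreover have "int d - int (d - 1 - l) = int l + 1" using l by simp
  ultimately have "w \<in> G (int l + 1)" by metis
  then obtain w' where Pw: "Pr w w'" and vw: "vge w' (int l + 1)" unfolding G_def by blast
  define cbi where "cbi = fls_const (- b)"
  have cbcbi: "cb * cbi = 1" using bnz by (simp add: cb_def cbi_def)
  define y where "y = - (cbi ^ N * w')"
  define y' where "y' = - (cbi ^ N * w)"
  have Py: "Pr y y'" unfolding y_def y'_def cbi_def
    by (intro Pr_uminus Pr_mult Pr_pow Pr_const Pr_swap[OF Pw])
  have vy: "vge y (int N * 0 + (int l + 1))" unfolding y_def cbi_def
    by (simp only: vge_uminus) (intro vge_mult vge_pow vge_const vw)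
  define \<delta> where "\<delta> = (cb * fc) ^ N * y"
  define \<delta>' where "\<delta>' = (cb * f) ^ N * y'"
  have "Pr \<delta> \<delta>'" unfolding \<delta>_def \<delta>'_def by (intro Pr_mult Pr_pow Pr_cb Pr_fc Py)
  then obtain u v where uv: "\<delta> = E u v" "\<delta>' = E' u v" unfolding Pr_def by auto
  have vd: "vge \<delta> (int N * int d + (int N * 0 + (int l + 1)))"
    unfolding \<delta>_def by (rule vge_mult[OF vge_cbfc_pow vy])
  define lam where "lam = poly_to_fls v"
  have dlam: "\<delta> = lam * f - poly_to_fls (- u)" unfolding uv lam_def E_def by (simp add: pf_uminus)
  have "vge (lam * f - poly_to_fls (- u)) 1"
    using vge_mono[OF vd, of 1] dlam by simp
  then have "dist_A (lam * f) = absv \<delta>" using distA_eq dlam by metis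
  also have "absv \<delta> < real CARD('a) powr (- of_int (int (d * N + l)))"
    unfolding absv_less_iff by (rule vge_mono[OF vd]) simp
  finally have "lam \<in> Lambda (inverse (real CARD('a) ^ (d * N + l))) f"
    unfolding Lambda_def A_set_def lam_def eps_eq by auto
  moreover have "inverse f ^ N * sqrtD f a * lam - w = (cb * fc) ^ N * \<delta>"
  proof -
    have dd: "\<delta> - \<delta>' = lam * (f - fc)" unfolding uv lam_def E_def E'_def by (simp add: algebra_simps)
    have "(cb * fc) ^ N * (cb * f) ^ N * cbi ^ N = ((cb * fc * f) * (cb * cbi)) ^ N"
      by (simp add: power_mult_distrib ac_simps)
    also have "\<dots> = 1" using cb_f_fc cbcbi by simp
    finally have one: "(cb * fc) ^ N * (cb * f) ^ N * cbi ^ N = 1" .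
    have "(cb * fc) ^ N * \<delta>' = - ((cb * fc) ^ N * (cb * f) ^ N * cbi ^ N * w)"
      unfolding \<delta>'_def y'_def by (simp add: ac_simps)
    then have d': "(cb * fc) ^ N * \<delta>' = - w" unfolding one by simp
    have "inverse f ^ N * sqrtD f a * lam = (cb * fc) ^ N * (\<delta> - \<delta>')"
      unfolding inv_f sqrtD_eq dd by (simp add: ac_simps)
    also have "\<dots> = (cb * fc) ^ N * \<delta> + w" using d' by (simp add: right_diff_distrib)
    finally show ?thesis by simp
  qed
  moreover have "vge ((cb * fc) ^ N * \<delta>) (int N)"
  proof -
    have "vge ((cb * fc) ^ N * \<delta>) (int N * int d + (int N * int d + (int N * 0 + (int l + 1))))"
      by (rule vge_mult[OF vge_cbfc_pow vd])
    then show ?thesis by (rule vge_mono) (use NdN[of N] in simp)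
  qed
  ultimately show ?thesis by metis
qed

end


theorem proposition1:
  fixes a :: "'a::{field,finite} poly" and b :: 'a and f :: "'a fls" and l :: nat
  assumes monic: "lead_coeff a = 1"
    and deg: "degree a \<ge> 1"
    and b: "b \<noteq> 0"
    and root: "f ^ 2 - poly_to_fls a * f - fls_const b = 0"
    and absf: "absv f = real CARD('a) ^ degree a"
    and notk: "f \<notin> k_set"
    and l: "l < degree a"
  shows "(\<lambda>N. hausdorff_dist
            ((\<lambda>lam. inverse f ^ N * sqrtD f a * lam)
               ` Lambda (inverse (real CARD('a) ^ (degree a * N + l))) f)
            (ideal_a f (degree a) (degree a - 1 - l)))
         \<longlonglongrightarrow> 0"
proof -
  interpret qunit a b f using monic deg b root absf by unfold_locales
  define q where "q = real CARD('a)"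
  have q1: "q > 1" unfolding q_def using card_ge2[where 'a='a] by simp
  define B where "B N = q powr (- real N)" for N :: nat
  have bnd: "0 \<le> hausdorff_dist
            ((\<lambda>lam. inverse f ^ N * sqrtD f a * lam)
               ` Lambda (inverse (real CARD('a) ^ (degree a * N + l))) f)
            (ideal_a f (degree a) (degree a - 1 - l)) \<and>
         hausdorff_dist
            ((\<lambda>lam. inverse f ^ N * sqrtD f a * lam)
               ` Lambda (inverse (real CARD('a) ^ (degree a * N + l))) f)
            (ideal_a f (degree a) (degree a - 1 - l)) \<le> ereal (B N)" for N
  proof (rule hd_bound)
    have "dist_A (0 * f) = absv (0 * f - poly_to_fls 0)" by (rule distA_eq) simp
    then have "dist_A (0 * f) = 0" by (simp add: absv_def)
    moreover have "inverse (real CARD('a) ^ (degree a * N + l)) > 0" by simp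
    ultimately have "0 \<in> Lambda (inverse (real CARD('a) ^ (degree a * N + l))) f"
      unfolding Lambda_def A_set_def by (auto intro: range_eqI[of _ _ 0])
    then show "(\<lambda>lam. inverse f ^ N * sqrtD f a * lam)
               ` Lambda (inverse (real CARD('a) ^ (degree a * N + l))) f \<noteq> {}" by blast
  next
    have Bq: "B N = real CARD('a) powr (- of_int (int N))" by (simp add: B_def q_def)
    show "\<forall>x\<in>(\<lambda>lam. inverse f ^ N * sqrtD f a * lam)
               ` Lambda (inverse (real CARD('a) ^ (degree a * N + l))) f.
          \<exists>y\<in>ideal_a f (degree a) (degree a - 1 - l). absv (x - y) \<le> B N"
      using dir1[OF l] unfolding Bq absv_le_iff by blast
    show "\<forall>y\<in>ideal_a f (degree a) (degree a - 1 - l).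
          \<exists>x\<in>(\<lambda>lam. inverse f ^ N * sqrtD f a * lam)
               ` Lambda (inverse (real CARD('a) ^ (degree a * N + l))) f. absv (x - y) \<le> B N"
      using dir2[OF l] unfolding Bq absv_le_iff by blast
  qed
  have "(\<lambda>N. (inverse q) ^ N) \<longlonglongrightarrow> 0"
    by (rule LIMSEQ_realpow_zero) (use q1 in \<open>auto simp: inverse_less_1_iff\<close>)
  moreover have "(inverse q) ^ N = B N" for N
    using q1 by (simp add: B_def powr_minus powr_realpow power_inverse)
  ultimately have "B \<longlonglongrightarrow> 0" by simp
  then have "(\<lambda>N. ereal (B N)) \<longlonglongrightarrow> ereal 0" by (rule tendsto_ereal)
  then have Bt: "(\<lambda>N. ereal (B N)) \<longlonglongrightarrow> 0" by (simp add: zero_ereal_def)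
  show ?thesis
    by (rule tendsto_sandwich[OF _ _ tendsto_const Bt]) (use bnd in auto)
qed

end
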